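(* Let $X$ be a set and let $R$ be a topology expander over $X$. Then the least fixed point $\mu\tau.\,R(\tau)$ of $R$ (which exists since the topologies on $X$ form a complete lattice under inclusion and $R$ is monotone) is a Noetherian topology on $X$.
   Context: A topological space is Noetherian if every subset is compact; equivalently, every increasing sequence $(U_i)_{i\in\mathbb N}$ of open sets satisfies $\bigcup_{i\in\mathbb N}U_i=\bigcup_{i\le j}U_i$ for some $j$. A topology $\tau$ is Noetherian if $(X,\tau)$ is. A refinement function over a set $X$ is a map $R$ from topologies on $X$ to topologies on $X$ such that (i) $\tau\subseteq\tau'$ implies $R(\tau)\subseteq R(\tau')$, and (ii) $R(\tau)$ is Noetherian whenever $\tau$ is. For a topology $\tau$ on $X$ and a subset $H\subseteq X$ (typically closed), the subset restriction $\tau|_H$ is the topology on $X$ generated by the sets $U\cap H$ for $U\in\tau$. A topology expander is a refinement function $R$ such that for every Noetherian topology $\tau$ with $\tau\subseteq R(\tau)$ and every set $H$ closed in $\tau$, one has $R(\tau)|_H = R(\tau|_H)|_H$. *)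

theory Defs
  imports "HOL-Analysis.Analysis"
begin

text \<open>Topologies on a carrier set X are values of the library type topology with
  topspace equal to X. Inclusion of topologies compares their open sets.\<close>

definition top_le :: "'a topology \<Rightarrow> 'a topology \<Rightarrow> bool" where
  "top_le \<tau> \<tau>' \<longleftrightarrow> (\<forall>U. openin \<tau> U \<longrightarrow> openin \<tau>' U)"

definition noetherian_top :: "'a topology \<Rightarrow> bool" where
  "noetherian_top \<tau> \<longleftrightarrow> (\<forall>S. S \<subseteq> topspace \<tau> \<longrightarrow> compactin \<tau> S)"

definition refinement_function :: "'a set \<Rightarrow> ('a topology \<Rightarrow> 'a topology) \<Rightarrow> bool" where
  "refinement_function X R \<longleftrightarrow>
     (\<forall>\<tau>. topspace \<tau> = X \<longrightarrow> topspace (R \<tau>) = X) \<and>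
     (\<forall>\<tau> \<tau>'. topspace \<tau> = X \<and> topspace \<tau>' = X \<and> top_le \<tau> \<tau>' \<longrightarrow> top_le (R \<tau>) (R \<tau>')) \<and>
     (\<forall>\<tau>. topspace \<tau> = X \<and> noetherian_top \<tau> \<longrightarrow> noetherian_top (R \<tau>))"

text \<open>Subset restriction: the topology on X generated by the sets U \<inter> H, U open in \<tau>
  (X itself is added to the generators so that the carrier is X, as the
  generated topology on X always contains X).\<close>
definition subset_restr :: "'a set \<Rightarrow> 'a topology \<Rightarrow> 'a set \<Rightarrow> 'a topology" where
  "subset_restr X \<tau> H = topology_generated_by (insert X {U \<inter> H | U. openin \<tau> U})"

definition topology_expander :: "'a set \<Rightarrow> ('a topology \<Rightarrow> 'a topology) \<Rightarrow> bool" where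
  "topology_expander X R \<longleftrightarrow> refinement_function X R \<and>
     (\<forall>\<tau> H. topspace \<tau> = X \<and> noetherian_top \<tau> \<and> top_le \<tau> (R \<tau>) \<and> closedin \<tau> H \<longrightarrow>
        subset_restr X (R \<tau>) H = subset_restr X (R (subset_restr X \<tau> H)) H)"

definition is_least_fixpoint :: "'a set \<Rightarrow> ('a topology \<Rightarrow> 'a topology) \<Rightarrow> 'a topology \<Rightarrow> bool" where
  "is_least_fixpoint X R \<tau> \<longleftrightarrow> topspace \<tau> = X \<and> R \<tau> = \<tau> \<and>
     (\<forall>\<sigma>. topspace \<sigma> = X \<and> R \<sigma> = \<sigma> \<longrightarrow> top_le \<tau> \<sigma>)"

end

theory Submission
  imports Defs
begin


definition tsup :: "'a set \<Rightarrow> 'a topology set \<Rightarrow> 'a topology" where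
  "tsup X D = topology_generated_by (insert X (\<Union>d\<in>D. {U. openin d U}))"

lemma top_le_refl: "top_le a a" by (simp add: top_le_def)
lemma top_le_trans: "top_le a b \<Longrightarrow> top_le b c \<Longrightarrow> top_le a c" by (simp add: top_le_def)
lemma top_le_antisym: "top_le a b \<Longrightarrow> top_le b a \<Longrightarrow> a = b"
  by (auto simp: top_le_def topology_eq)

lemma topspace_tsup: "(\<And>d. d \<in> D \<Longrightarrow> topspace d = X) \<Longrightarrow> topspace (tsup X D) = X"
  unfolding tsup_def topology_generated_by_topspace
  by (auto dest: openin_subset)

lemma tsup_upper: "d \<in> D \<Longrightarrow> top_le d (tsup X D)"
  unfolding top_le_def tsup_def
  by (auto intro!: topology_generated_by_Basis)

lemma tsup_least:
  assumes "topspace t = X" "\<And>d. d \<in> D \<Longrightarrow> top_le d t"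
  shows "top_le (tsup X D) t"
  unfolding top_le_def tsup_def openin_topology_generated_by_iff
proof (intro allI impI)
  fix U assume "generate_topology_on (insert X (\<Union>d\<in>D. {U. openin d U})) U"
  then show "openin t U"
  proof induction
    case Empty then show ?case by simp
  next
    case (Int a b) then show ?case by auto
  next
    case (UN K) then show ?case by auto
  next
    case (Basis s) then show ?case using assms by (auto simp: top_le_def)
  qed
qed

lemma gen_subset:
  assumes "generate_topology_on S V" "\<And>s. s \<in> S \<Longrightarrow> s \<subseteq> X"
  shows "V \<subseteq> X \<or> True"
  by simp

lemma gen_basis:
  assumes "generate_topology_on G V" "X \<in> G" "\<And>g. g \<in> G \<Longrightarrow> g \<subseteq> X"
    "\<And>a b. a \<in> G \<Longrightarrow> b \<in> G \<Longrightarrow> a \<inter> b \<in> G"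
  shows "\<forall>y\<in>V. \<exists>g\<in>G. y \<in> g \<and> g \<subseteq> V"
  using assms(1)
proof induction
  case Empty then show ?case by simp
next
  case (Int a b)
  show ?case
  proof
    fix y assume "y \<in> a \<inter> b"
    then obtain g1 g2 where "g1 \<in> G" "y \<in> g1" "g1 \<subseteq> a" "g2 \<in> G" "y \<in> g2" "g2 \<subseteq> b"
      using Int by blast
    then show "\<exists>g\<in>G. y \<in> g \<and> g \<subseteq> a \<inter> b"
      by (intro bexI[of _ "g1 \<inter> g2"]) (auto intro: assms(4))
  qed
next
  case (UN K)
  show ?case
  proof
    fix y assume "y \<in> \<Union>K"
    then obtain k where k: "k \<in> K" "y \<in> k" by blast
    then obtain g where "g \<in> G" "y \<in> g" "g \<subseteq> k" using UN.IH by blast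
    then show "\<exists>g\<in>G. y \<in> g \<and> g \<subseteq> \<Union>K" using k by blast
  qed
next
  case (Basis s) then show ?case by blast
qed

lemma gen_sub:
  assumes "generate_topology_on G V" "\<And>g. g \<in> G \<Longrightarrow> g \<subseteq> X"
  shows "V \<subseteq> X"
  using assms(1) by induction (auto dest: assms(2))

lemma tsup_open_chain:
  assumes "\<And>d. d \<in> D \<Longrightarrow> topspace d = X"
    and ch: "\<And>a b. a \<in> D \<Longrightarrow> b \<in> D \<Longrightarrow> top_le a b \<or> top_le b a"
    and "openin (tsup X D) V"
  shows "V = X \<or> (\<forall>y\<in>V. \<exists>d\<in>D. \<exists>U. openin d U \<and> y \<in> U \<and> U \<subseteq> V)"
proof -
  let ?G = "insert X (\<Union>d\<in>D. {U. openin d U})"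
  have sub: "\<And>g. g \<in> ?G \<Longrightarrow> g \<subseteq> X" using assms(1) by (auto dest: openin_subset)
  have "generate_topology_on ?G V" using assms(3) unfolding tsup_def openin_topology_generated_by_iff .
  then show ?thesis
  proof induction
    case Empty then show ?case by simp
  next
    case (Int a b)
    have sa: "a \<subseteq> X" using gen_sub[OF Int.hyps(1) sub] .
    have sb: "b \<subseteq> X" using gen_sub[OF Int.hyps(2) sub] .
    show ?case
    proof (cases "a = X \<or> b = X")
      case True then show ?thesis using Int sa sb
        by (metis inf.absorb_iff2 inf.orderE)
    next
      case False
      then have A: "\<forall>y\<in>a. \<exists>d\<in>D. \<exists>U. openin d U \<and> y \<in> U \<and> U \<subseteq> a"
        and B: "\<forall>y\<in>b. \<exists>d\<in>D. \<exists>U. openin d U \<and> y \<in> U \<and> U \<subseteq> b" using Int by auto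
      have "\<forall>y\<in>a \<inter> b. \<exists>d\<in>D. \<exists>U. openin d U \<and> y \<in> U \<and> U \<subseteq> a \<inter> b"
      proof
        fix y assume "y \<in> a \<inter> b"
        then have ya: "y \<in> a" and yb: "y \<in> b" by auto
        obtain d1 U1 where 1: "d1 \<in> D" "openin d1 U1" "y \<in> U1" "U1 \<subseteq> a" using A ya by blast
        obtain d2 U2 where 2: "d2 \<in> D" "openin d2 U2" "y \<in> U2" "U2 \<subseteq> b" using B yb by blast
        show "\<exists>d\<in>D. \<exists>U. openin d U \<and> y \<in> U \<and> U \<subseteq> a \<inter> b"
        proof (cases "top_le d1 d2")
          case True
          then have "openin d2 (U1 \<inter> U2)" using 1 2 by (auto simp: top_le_def)
          then show ?thesis using 1 2 by blast
        next
          case False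
          then have "top_le d2 d1" using ch 1 2 by blast
          then have "openin d1 (U1 \<inter> U2)" using 1 2 by (auto simp: top_le_def)
          then show ?thesis using 1 2 by blast
        qed
      qed
      then show ?thesis by blast
    qed
  next
    case (UN K)
    show ?case
    proof (cases "X \<in> K")
      case True
      have "\<Union>K \<subseteq> X"
      proof (rule Union_least)
        fix k assume "k \<in> K"
        show "k \<subseteq> X" using gen_sub[OF UN.hyps[OF \<open>k \<in> K\<close>] sub] .
      qed
      then show ?thesis using True by blast
    next
      case False
      then have kk: "\<forall>k\<in>K. \<forall>y\<in>k. \<exists>d\<in>D. \<exists>U. openin d U \<and> y \<in> U \<and> U \<subseteq> k" using UN by metis
      have "\<forall>y\<in>\<Union>K. \<exists>d\<in>D. \<exists>U. openin d U \<and> y \<in> U \<and> U \<subseteq> \<Union>K"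
      proof
        fix y assume "y \<in> \<Union>K"
        then obtain k where k: "k \<in> K" "y \<in> k" by blast
        then obtain d U where "d \<in> D" "openin d U" "y \<in> U" "U \<subseteq> k" using kk by blast
        then show "\<exists>d\<in>D. \<exists>U. openin d U \<and> y \<in> U \<and> U \<subseteq> \<Union>K" using k by blast
      qed
      then show ?thesis by (rule disjI2)
    qed
  next
    case (Basis s) then show ?case by blast
  qed
qed

lemma topspace_subset_restr:
  assumes "topspace t = X" shows "topspace (subset_restr X t H) = X"
  unfolding subset_restr_def topology_generated_by_topspace
  using assms by (auto dest: openin_subset)

lemma subset_restr_open:
  assumes "topspace t = X"
  shows "openin (subset_restr X t H) V \<longleftrightarrow> V = X \<or> (\<exists>U. openin t U \<and> V = U \<inter> H)"
proof
  assume "V = X \<or> (\<exists>U. openin t U \<and> V = U \<inter> H)"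
  then show "openin (subset_restr X t H) V"
    unfolding subset_restr_def by (auto intro!: topology_generated_by_Basis)
next
  let ?G = "insert X {U \<inter> H | U. openin t U}"
  have sub: "\<And>g. g \<in> ?G \<Longrightarrow> g \<subseteq> X" using assms by (auto dest: openin_subset)
  assume "openin (subset_restr X t H) V"
  then have "generate_topology_on ?G V" unfolding subset_restr_def openin_topology_generated_by_iff .
  then show "V = X \<or> (\<exists>U. openin t U \<and> V = U \<inter> H)"
  proof induction
    case Empty then show ?case by (metis empty_iff inf_bot_left openin_empty)
  next
    case (Int a b)
    have sa: "a \<subseteq> X" using gen_sub[OF Int.hyps(1) sub] .
    have sb: "b \<subseteq> X" using gen_sub[OF Int.hyps(2) sub] .
    show ?case
    proof (cases "a = X \<or> b = X")
      case True then show ?thesis using Int sa sb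
        by (metis inf.absorb_iff2 inf.orderE)
    next
      case False
      then obtain U1 U2 where "openin t U1" "a = U1 \<inter> H" "openin t U2" "b = U2 \<inter> H" using Int by blast
      then show ?thesis by (intro disjI2 exI[of _ "U1 \<inter> U2"]) auto
    qed
  next
    case (UN K)
    show ?case
    proof (cases "X \<in> K")
      case True
      have "\<Union>K \<subseteq> X"
      proof (rule Union_least)
        fix k assume "k \<in> K"
        show "k \<subseteq> X" using gen_sub[OF UN.hyps[OF \<open>k \<in> K\<close>] sub] .
      qed
      then show ?thesis using True by blast
    next
      case False
      then have "\<forall>k\<in>K. \<exists>U. openin t U \<and> k = U \<inter> H" using UN by metis
      then obtain f where f: "\<forall>k\<in>K. openin t (f k) \<and> k = f k \<inter> H" by metis
      then have "openin t (\<Union>(f ` K))" by auto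
      moreover have "\<Union>K = \<Union>(f ` K) \<inter> H" using f by blast
      ultimately show ?thesis by blast
    qed
  next
    case (Basis s) then show ?case by blast
  qed
qed

definition badseq :: "'a topology \<Rightarrow> (nat \<Rightarrow> 'a) \<Rightarrow> (nat \<Rightarrow> 'a set) \<Rightarrow> bool" where
  "badseq t x V \<longleftrightarrow> (\<forall>n. openin t (V n) \<and> x n \<in> V n) \<and> (\<forall>n m. n < m \<longrightarrow> x m \<notin> V n)"

lemma noeth_no_bad:
  assumes "noetherian_top t" shows "\<not> badseq t x V"
proof
  assume b: "badseq t x V"
  have S: "range x \<subseteq> topspace t" using b unfolding badseq_def by (meson image_subset_iff openin_subset subsetD)
  then have "compactin t (range x)" using assms unfolding noetherian_top_def by blast
  moreover have "\<forall>U\<in>range V. openin t U" "range x \<subseteq> \<Union>(range V)" using b unfolding badseq_def by auto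
  ultimately obtain F where F: "finite F" "F \<subseteq> range V" "range x \<subseteq> \<Union>F"
    unfolding compactin_def by meson
  then obtain I where I: "finite I" "F = V ` I" by (meson finite_subset_image)
  obtain k where k: "\<forall>i\<in>I. i < k" using I(1) by (metis finite_nat_bounded lessThan_iff subsetD subsetI)
  have "x k \<in> \<Union>F" using F(3) by blast
  then obtain i where "i \<in> I" "x k \<in> V i" using I by auto
  then show False using b k unfolding badseq_def by auto
qed

lemma no_bad_noeth:
  assumes "\<And>x V. \<not> badseq t x V" shows "noetherian_top t"
  unfolding noetherian_top_def
proof (intro allI impI)
  fix S assume S: "S \<subseteq> topspace t"
  show "compactin t S"
  proof (rule ccontr)
    assume "\<not> compactin t S"
    then have "\<not> (\<forall>\<U>. (\<forall>U\<in>\<U>. openin t U) \<and> S \<subseteq> \<Union>\<U> \<longrightarrow> (\<exists>F. finite F \<and> F \<subseteq> \<U> \<and> S \<subseteq> \<Union>F))"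
      using S unfolding compactin_def by simp
    then obtain \<U> where U: "\<forall>U\<in>\<U>. openin t U" "S \<subseteq> \<Union>\<U>"
      and nf0: "\<not> (\<exists>F. finite F \<and> F \<subseteq> \<U> \<and> S \<subseteq> \<Union>F)"
      by blast
    have nf: "\<And>F. finite F \<Longrightarrow> F \<subseteq> \<U> \<Longrightarrow> \<not> S \<subseteq> \<Union>F" using nf0 by blast
    have "\<forall>F. \<exists>p. finite F \<and> F \<subseteq> \<U> \<longrightarrow> fst p \<in> S - \<Union>F \<and> snd p \<in> \<U> \<and> fst p \<in> snd p"
    proof
      fix F show "\<exists>p. finite F \<and> F \<subseteq> \<U> \<longrightarrow> fst p \<in> S - \<Union>F \<and> snd p \<in> \<U> \<and> fst p \<in> snd p"
      proof (cases "finite F \<and> F \<subseteq> \<U>")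
        case True
        then obtain y where "y \<in> S" "y \<notin> \<Union>F" using nf by blast
        then obtain U where "U \<in> \<U>" "y \<in> U" using U by blast
        then show ?thesis using \<open>y \<in> S\<close> \<open>y \<notin> \<Union>F\<close> by (intro exI[of _ "(y, U)"]) auto
      qed auto
    qed
    then obtain c where c: "\<And>F. finite F \<Longrightarrow> F \<subseteq> \<U> \<Longrightarrow> fst (c F) \<in> S - \<Union>F \<and> snd (c F) \<in> \<U> \<and> fst (c F) \<in> snd (c F)"
      by metis
    define Fs where "Fs = rec_nat {} (\<lambda>n F. insert (snd (c F)) F)"
    have Fs0: "Fs 0 = {}" and FsS: "\<And>n. Fs (Suc n) = insert (snd (c (Fs n))) (Fs n)" by (simp_all add: Fs_def)
    have inv: "finite (Fs n) \<and> Fs n \<subseteq> \<U>" for n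
      by (induction n) (auto simp: Fs0 FsS dest: c)
    define x where "x n = fst (c (Fs n))" for n
    define V where "V n = snd (c (Fs n))" for n
    have mono: "n < m \<Longrightarrow> V n \<in> Fs m" for n m
    proof (induction m)
      case 0 then show ?case by simp
    next
      case (Suc m) then show ?case by (auto simp: FsS V_def less_Suc_eq)
    qed
    have "badseq t x V"
      unfolding badseq_def
    proof (rule conjI; intro allI impI)
      fix n show "openin t (V n) \<and> x n \<in> V n" using c[OF inv[THEN conjunct1] inv[THEN conjunct2], of n] U
        unfolding x_def V_def by auto
    next
      fix n m :: nat assume "n < m"
      then have "V n \<in> Fs m" by (rule mono)
      moreover have "x m \<notin> \<Union>(Fs m)" using c[OF inv[THEN conjunct1] inv[THEN conjunct2], of m] unfolding x_def by auto
      ultimately show "x m \<notin> V n" by blast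
    qed
    then show False using assms by blast
  qed
qed

lemma noeth_iff: "noetherian_top t \<longleftrightarrow> (\<forall>x V. \<not> badseq t x V)"
  using noeth_no_bad no_bad_noeth by blast

lemma noeth_coarser:
  assumes "noetherian_top t'" "top_le t t'" shows "noetherian_top t"
  using assms unfolding noeth_iff badseq_def top_le_def by blast

lemma nat_mono_subseq:
  fixes a :: "nat \<Rightarrow> nat"
  shows "\<exists>p::nat\<Rightarrow>nat. strict_mono p \<and> (\<forall>i j. i \<le> j \<longrightarrow> a (p i) \<le> a (p j))"
proof -
  obtain f where f: "strict_mono f" "monoseq (\<lambda>n. a (f n))" using seq_monosub by blast
  show ?thesis
  proof (cases "\<forall>m. \<forall>n\<ge>m. a (f m) \<le> a (f n)")
    case True
    then have "strict_mono f \<and> (\<forall>i j. i \<le> j \<longrightarrow> a (f i) \<le> a (f j))" using f(1) by auto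
    then show ?thesis by (rule exI[of _ f])
  next
    case False
    then have dec: "\<forall>m. \<forall>n\<ge>m. a (f n) \<le> a (f m)" using f(2) unfolding monoseq_def by blast
    obtain N where N: "\<forall>k. a (f N) \<le> a (f k)"
      using ex_has_least_nat[of "\<lambda>_. True" 0 "\<lambda>k. a (f k)"] by auto
    define p where "p k = f (N + k)" for k
    have "strict_mono p" using f(1) unfolding p_def strict_mono_def by simp
    moreover have "a (p i) = a (f N)" for i using dec N unfolding p_def
      by (meson le_add1 le_antisym)
    ultimately show ?thesis by auto
  qed
qed



locale exp_ctx =
  fixes X :: "'a set" and R :: "'a topology \<Rightarrow> 'a topology"
  assumes expd: "topology_expander X R"
begin

lemma R_top: "topspace t = X \<Longrightarrow> topspace (R t) = X"
  using expd unfolding topology_expander_def refinement_function_def by blast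

lemma R_mono: "topspace t = X \<Longrightarrow> topspace t' = X \<Longrightarrow> top_le t t' \<Longrightarrow> top_le (R t) (R t')"
  using expd unfolding topology_expander_def refinement_function_def by blast

lemma R_noeth: "topspace t = X \<Longrightarrow> noetherian_top t \<Longrightarrow> noetherian_top (R t)"
  using expd unfolding topology_expander_def refinement_function_def by blast

lemma R_exp: "topspace t = X \<Longrightarrow> noetherian_top t \<Longrightarrow> top_le t (R t) \<Longrightarrow> closedin t H \<Longrightarrow>
   subset_restr X (R t) H = subset_restr X (R (subset_restr X t H)) H"
  using expd unfolding topology_expander_def by blast

inductive_set tower :: "'a topology set" where
  step: "t \<in> tower \<Longrightarrow> R t \<in> tower"
| lim: "\<forall>d\<in>D. d \<in> tower \<Longrightarrow> tsup X D \<in> tower"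

lemma tower_top: "t \<in> tower \<Longrightarrow> topspace t = X"
proof (induction rule: tower.induct)
  case (step t) then show ?case using R_top by blast
next
  case (lim D) then show ?case by (intro topspace_tsup) auto
qed

lemma tsup_top: "D \<subseteq> tower \<Longrightarrow> topspace (tsup X D) = X"
  by (rule topspace_tsup) (use tower_top in blast)

lemma tsup_least_t: "D \<subseteq> tower \<Longrightarrow> t \<in> tower \<Longrightarrow> (\<And>d. d \<in> D \<Longrightarrow> top_le d t) \<Longrightarrow> top_le (tsup X D) t"
  by (rule tsup_least) (auto simp: tower_top)

lemma tower_post: "t \<in> tower \<Longrightarrow> top_le t (R t)"
proof (induction rule: tower.induct)
  case (step t)
  have "t \<in> tower" "R t \<in> tower" using step tower.step by auto
  then show ?case using R_mono[OF tower_top tower_top step.IH] by blast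
next
  case (lim D)
  have DT: "D \<subseteq> tower" using lim by auto
  have top: "topspace (tsup X D) = X" using tsup_top[OF DT] .
  show ?case
  proof (rule tsup_least)
    show "topspace (R (tsup X D)) = X" using top R_top by blast
    fix d assume dD: "d \<in> D"
    have 1: "top_le d (R d)" using lim dD by auto
    have 2: "top_le (R d) (R (tsup X D))"
      using R_mono[OF tower_top top tsup_upper[OF dD]] DT dD by blast
    show "top_le d (R (tsup X D))" using top_le_trans[OF 1 2] .
  qed
qed

lemma tower_below_pre:
  assumes "topspace s = X" "top_le (R s) s" "t \<in> tower"
  shows "top_le t s"
  using assms(3)
proof (induction rule: tower.induct)
  case (step t)
  have "top_le (R t) (R s)" using R_mono[OF tower_top assms(1) step.IH] step.hyps .
  then show ?case using top_le_trans assms(2) by blast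
next
  case (lim D)
  show ?case by (rule tsup_least) (use assms(1) lim in auto)
qed

definition normal where "normal t \<longleftrightarrow> (\<forall>x\<in>tower. top_le x t \<and> x \<noteq> t \<longrightarrow> top_le (R x) t)"

lemma lemA:
  assumes "t \<in> tower" "normal t" "x \<in> tower"
  shows "top_le x t \<or> top_le (R t) x"
  using assms(3)
proof (induction rule: tower.induct)
  case (step x)
  show ?case
  proof (cases "top_le (R t) x")
    case True
    have "top_le x (R x)" using tower_post step.hyps .
    then show ?thesis using top_le_trans[OF True] by blast
  next
    case False
    then have xt: "top_le x t" using step.IH by blast
    show ?thesis
    proof (cases "x = t")
      case True then show ?thesis by (simp add: top_le_refl)
    next
      case False then show ?thesis using assms(2) step.hyps xt unfolding normal_def by blast
    qed
  qed
next
  case (lim D)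
  show ?case
  proof (cases "\<forall>d\<in>D. top_le d t")
    case True
    have "top_le (tsup X D) t" by (rule tsup_least) (use True assms(1) tower_top in auto)
    then show ?thesis ..
  next
    case False
    then obtain d where d: "d \<in> D" "top_le (R t) d" using lim by blast
    have "top_le (R t) (tsup X D)" using top_le_trans[OF d(2) tsup_upper[OF d(1)]] .
    then show ?thesis ..
  qed
qed

lemma all_normal: "t \<in> tower \<Longrightarrow> normal t"
proof (induction rule: tower.induct)
  case (step t)
  show ?case unfolding normal_def
  proof (intro ballI impI)
    fix x assume x: "x \<in> tower" "top_le x (R t) \<and> x \<noteq> R t"
    have "top_le x t \<or> top_le (R t) x" using lemA[OF step.hyps step.IH x(1)] .
    then have xt: "top_le x t" using x top_le_antisym by blast
    show "top_le (R x) (R t)"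
    proof (cases "x = t")
      case True then show ?thesis by (simp add: top_le_refl)
    next
      case False
      then have "top_le (R x) t" using step.IH x(1) xt unfolding normal_def by blast
      moreover have "top_le t (R t)" using tower_post step.hyps .
      ultimately show ?thesis by (rule top_le_trans)
    qed
  qed
next
  case (lim D)
  have DT: "D \<subseteq> tower" using lim by auto
  have Dn: "\<And>d. d \<in> D \<Longrightarrow> normal d" using lim by auto
  show ?case unfolding normal_def
  proof (intro ballI impI)
    fix x assume x: "x \<in> tower" "top_le x (tsup X D) \<and> x \<noteq> tsup X D"
    have A: "\<And>d y. d \<in> D \<Longrightarrow> y \<in> tower \<Longrightarrow> top_le y d \<or> top_le (R d) y"
      using lemA DT Dn by blast
    show "top_le (R x) (tsup X D)"
    proof (cases "\<forall>d\<in>D. top_le (R d) x")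
      case True
      have "\<And>d. d \<in> D \<Longrightarrow> top_le d x"
      proof -
        fix d assume "d \<in> D"
        then have "top_le d (R d)" "top_le (R d) x" using tower_post DT True by auto
        then show "top_le d x" by (rule top_le_trans)
      qed
      then have "top_le (tsup X D) x" using tsup_least_t[OF DT x(1)] by blast
      then show ?thesis using x top_le_antisym by blast
    next
      case False
      then obtain d where d: "d \<in> D" "\<not> top_le (R d) x" by blast
      then have xd: "top_le x d" using A x by blast
      show ?thesis
      proof (cases "x = d")
        case False
        then have "top_le (R x) d" using Dn d x xd unfolding normal_def by blast
        then show ?thesis using top_le_trans tsup_upper[OF d(1)] by blast
      next
        case True
        show ?thesis
        proof (cases "\<exists>d'\<in>D. top_le (R d) d'")
          case True
          then obtain d' where "d' \<in> D" "top_le (R d) d'" by blast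
          then have "top_le (R d) (tsup X D)" using top_le_trans tsup_upper by blast
          then show ?thesis using \<open>x = d\<close> by simp
        next
          case False
          then have "\<And>d'. d' \<in> D \<Longrightarrow> top_le d' d" using A DT d(1) by blast
          then have "top_le (tsup X D) d" using tsup_least_t[OF DT] DT d(1) by blast
          then show ?thesis using x \<open>x = d\<close> top_le_antisym by blast
        qed
      qed
    qed
  qed
qed

lemma tower_cmp: "t \<in> tower \<Longrightarrow> x \<in> tower \<Longrightarrow> top_le x t \<or> top_le (R t) x"
  using lemA all_normal by blast

lemma tower_chain: "a \<in> tower \<Longrightarrow> b \<in> tower \<Longrightarrow> top_le a b \<or> top_le b a"
proof -
  assume a: "a \<in> tower" and b: "b \<in> tower"
  have "top_le a b \<or> top_le (R b) a" using tower_cmp[OF b a] .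
  then show ?thesis
  proof
    assume "top_le (R b) a"
    then have "top_le b a" using top_le_trans[OF tower_post[OF b]] by blast
    then show ?thesis ..
  qed simp
qed

lemma tower_least:
  assumes "S \<subseteq> tower" "S \<noteq> {}"
  shows "\<exists>m\<in>S. \<forall>s\<in>S. top_le m s"
proof -
  define L where "L = {x\<in>tower. \<forall>s\<in>S. top_le x s}"
  have LT: "L \<subseteq> tower" unfolding L_def by blast
  define m where "m = tsup X L"
  have mt: "m \<in> tower" unfolding m_def using LT by (intro tower.lim) blast
  have ml: "\<forall>s\<in>S. top_le m s"
  proof
    fix s assume s: "s \<in> S"
    show "top_le m s" unfolding m_def
      by (rule tsup_least_t[OF LT]) (use s assms(1) L_def in auto)
  qed
  show ?thesis
  proof (cases "m \<in> S")
    case True then show ?thesis using ml by blast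
  next
    case False
    have "\<forall>s\<in>S. top_le (R m) s"
    proof
      fix s assume "s \<in> S"
      then have "top_le s m \<or> top_le (R m) s" using tower_cmp mt assms(1) by blast
      moreover have "s \<noteq> m" using False \<open>s \<in> S\<close> by blast
      ultimately show "top_le (R m) s" using ml \<open>s \<in> S\<close> top_le_antisym by blast
    qed
    then have "R m \<in> L" unfolding L_def using mt tower.step by blast
    then have "top_le (R m) m" unfolding m_def by (rule tsup_upper)
    then have all: "\<forall>x\<in>tower. top_le x m" using tower_below_pre[OF tower_top[OF mt]] by blast
    obtain s where "s \<in> S" using assms(2) by blast
    then have "top_le s m" using all assms(1) by blast
    then have "s = m" using ml \<open>s \<in> S\<close> top_le_antisym by blast
    then show ?thesis using False \<open>s \<in> S\<close> by blast
  qed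
qed

lemma tower_repr:
  assumes "r \<in> tower"
  shows "(\<exists>t\<in>tower. top_le t r \<and> t \<noteq> r \<and> R t = r) \<or> r = tsup X {x\<in>tower. top_le x r \<and> x \<noteq> r}"
proof -
  define L where "L = {x\<in>tower. top_le x r \<and> x \<noteq> r}"
  have LT: "L \<subseteq> tower" unfolding L_def by blast
  define m where "m = tsup X L"
  have mt: "m \<in> tower" unfolding m_def using LT by (intro tower.lim) blast
  have mr: "top_le m r" unfolding m_def
    by (rule tsup_least_t[OF LT assms]) (auto simp: L_def)
  show ?thesis
  proof (cases "m = r")
    case True
    then have "r = tsup X L" unfolding m_def by simp
    then show ?thesis unfolding L_def by (rule disjI2)
  next
    case False
    then have "m \<in> L" using mt mr L_def by blast
    have "top_le r m \<or> top_le (R m) r" using tower_cmp[OF mt assms] .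
    then have Rm: "top_le (R m) r" using mr False top_le_antisym by blast
    show ?thesis
    proof (cases "R m = r")
      case True then show ?thesis using mt mr False by blast
    next
      case False
      then have "R m \<in> L" using Rm L_def mt tower.step by blast
      then have "top_le (R m) m" unfolding m_def by (rule tsup_upper)
      then have "top_le r m" using tower_below_pre[OF tower_top[OF mt]] assms by blast
      then show ?thesis using mr \<open>m \<noteq> r\<close> top_le_antisym by blast
    qed
  qed
qed

definition mu where "mu = tsup X tower"

lemma mu_tower: "mu \<in> tower" unfolding mu_def by (rule tower.lim) simp

lemma mu_fix: "R mu = mu"
proof -
  have "R mu \<in> tower" using mu_tower tower.step by blast
  then have "top_le (R mu) mu" unfolding mu_def by (rule tsup_upper)
  moreover have "top_le mu (R mu)" using tower_post mu_tower by blast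
  ultimately show ?thesis using top_le_antisym by blast
qed

lemma mu_least: "is_least_fixpoint X R mu"
  unfolding is_least_fixpoint_def
proof (intro conjI allI impI)
  show "topspace mu = X" using tower_top mu_tower by blast
  show "R mu = mu" by (rule mu_fix)
  fix s assume s: "topspace s = X \<and> R s = s"
  then have "top_le (R s) s" by (simp add: top_le_refl)
  then show "top_le mu s" using tower_below_pre[of s mu] mu_tower s by blast
qed

end



lemma minimal_bad:
  fixes P :: "(nat \<Rightarrow> 'b) \<Rightarrow> bool" and rk :: "'b \<Rightarrow> 'c \<Rightarrow> bool" and le :: "'c \<Rightarrow> 'c \<Rightarrow> bool"
  assumes least: "\<And>S. S \<subseteq> T \<Longrightarrow> S \<noteq> {} \<Longrightarrow> \<exists>m\<in>S. \<forall>s\<in>S. le m s"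
    and rkT: "\<And>z n. P z \<Longrightarrow> \<exists>r\<in>T. rk (z n) r"
    and closed: "\<And>z. (\<And>n. \<exists>z'. P z' \<and> (\<forall>i\<le>n. z' i = z i)) \<Longrightarrow> P z"
    and ex: "P z0"
  shows "\<exists>z \<rho>. P z \<and> (\<forall>n. \<rho> n \<in> T \<and> rk (z n) (\<rho> n)) \<and>
     (\<forall>N z' r'. P z' \<and> (\<forall>i<N. z' i = z i) \<and> r' \<in> T \<and> rk (z' N) r' \<longrightarrow> le (\<rho> N) r')"
proof -
  define cand where "cand p n e r \<longleftrightarrow> (\<exists>z'. P z' \<and> (\<forall>i<n. z' i = p i) \<and> z' n = e) \<and> r \<in> T \<and> rk e r"
    for p :: "nat \<Rightarrow> 'b" and n e r
  define spec where "spec p n er \<longleftrightarrow> cand p n (fst er) (snd er) \<and> (\<forall>e' r'. cand p n e' r' \<longrightarrow> le (snd er) r')"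
    for p n er
  define chs where "chs p n = (SOME er. spec p n er)" for p n
  have ch: "spec p n (chs p n)" if exz: "\<exists>z'. P z' \<and> (\<forall>i<n. z' i = p i)" for p n
  proof -
    let ?S = "{r. \<exists>e. cand p n e r}"
    obtain z' where z': "P z'" "\<forall>i<n. z' i = p i" using exz by blast
    obtain r where "r \<in> T" "rk (z' n) r" using rkT z'(1) by blast
    then have "r \<in> ?S" unfolding cand_def using z' by blast
    moreover have "?S \<subseteq> T" unfolding cand_def by blast
    ultimately obtain m where m: "m \<in> ?S" "\<forall>s\<in>?S. le m s" using least by blast
    then obtain e where "cand p n e m" by blast
    then have "spec p n (e, m)" unfolding spec_def using m by auto
    then show ?thesis unfolding chs_def by (rule someI)
  qed
  define pf where "pf = rec_nat (\<lambda>_. undefined) (\<lambda>n p. p(n := fst (chs p n)))"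
  have pf0: "pf 0 = (\<lambda>_. undefined)" and pfS: "\<And>n. pf (Suc n) = (pf n)(n := fst (chs (pf n) n))"
    by (simp_all add: pf_def)
  have ext: "\<exists>z'. P z' \<and> (\<forall>i<n. z' i = pf n i)" for n
  proof (induction n)
    case 0 then show ?case using ex by blast
  next
    case (Suc n)
    have "spec (pf n) n (chs (pf n) n)" using ch Suc by blast
    then obtain z' where "P z'" "\<forall>i<n. z' i = pf n i" "z' n = fst (chs (pf n) n)"
      unfolding spec_def cand_def by blast
    then show ?case by (intro exI[of _ z']) (auto simp: pfS less_Suc_eq)
  qed
  define z where "z n = fst (chs (pf n) n)" for n
  define \<rho> where "\<rho> n = snd (chs (pf n) n)" for n
  have sp: "spec (pf n) n (z n, \<rho> n)" for n using ch[OF ext] unfolding z_def \<rho>_def by simp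
  have pfz: "i < n \<Longrightarrow> pf n i = z i" for i n
  proof (induction n)
    case 0 then show ?case by simp
  next
    case (Suc n) then show ?case by (auto simp: pfS z_def less_Suc_eq)
  qed
  have Pz: "P z"
  proof (rule closed)
    fix n
    obtain z' where "P z'" "\<forall>i<Suc n. z' i = pf (Suc n) i" using ext by blast
    then show "\<exists>z'. P z' \<and> (\<forall>i\<le>n. z' i = z i)" using pfz by (intro exI[of _ z']) auto
  qed
  have "\<forall>n. \<rho> n \<in> T \<and> rk (z n) (\<rho> n)" using sp unfolding spec_def cand_def by auto
  moreover have "\<forall>N z' r'. P z' \<and> (\<forall>i<N. z' i = z i) \<and> r' \<in> T \<and> rk (z' N) r' \<longrightarrow> le (\<rho> N) r'"
  proof (intro allI impI)
    fix N z' r' assume a: "P z' \<and> (\<forall>i<N. z' i = z i) \<and> r' \<in> T \<and> rk (z' N) r'"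
    then have "cand (pf N) N (z' N) r'" unfolding cand_def using pfz by auto
    then show "le (\<rho> N) r'" using sp[of N] unfolding spec_def by auto
  qed
  ultimately show ?thesis using Pz by blast
qed



lemma finite_max_chain:
  assumes "finite A" "A \<noteq> {}" "\<And>a b. a \<in> A \<Longrightarrow> b \<in> A \<Longrightarrow> top_le a b \<or> top_le b a"
  shows "\<exists>m\<in>A. \<forall>a\<in>A. top_le a m"
  using assms
proof (induction A rule: finite_ne_induct)
  case (singleton x) then show ?case by (simp add: top_le_refl)
next
  case (insert x F)
  have "\<And>a b. a \<in> F \<Longrightarrow> b \<in> F \<Longrightarrow> top_le a b \<or> top_le b a" using insert.prems by blast
  then obtain m where m: "m \<in> F" "\<forall>a\<in>F. top_le a m" using insert.IH by blast
  show ?case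
  proof (cases "top_le x m")
    case True
    then have "\<forall>a\<in>insert x F. top_le a m" using m(2) by blast
    then show ?thesis using m(1) by blast
  next
    case False
    then have mx: "top_le m x" using insert.prems m(1) by blast
    have "\<forall>a\<in>insert x F. top_le a x"
    proof
      fix a assume "a \<in> insert x F"
      then show "top_le a x"
      proof
        assume "a = x" then show ?thesis by (simp add: top_le_refl)
      next
        assume "a \<in> F" then have "top_le a m" using m(2) by blast
        then show ?thesis using mx by (rule top_le_trans)
      qed
    qed
    then show ?thesis by blast
  qed
qed

lemma closure_finer:
  assumes "top_le s t" "topspace s = topspace t" "closedin s C" "A \<subseteq> C"
  shows "t closure_of A \<subseteq> C"
proof (rule closure_of_minimal[OF assms(4)])
  show "closedin t C" using assms(1-3) unfolding closedin_def top_le_def by simp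
qed

context exp_ctx
begin

lemma sup_noeth:
  assumes DT: "D \<subseteq> tower" and DN: "\<forall>d\<in>D. noetherian_top d"
  shows "noetherian_top (tsup X D)"
proof (rule ccontr)
  assume nn: "\<not> noetherian_top (tsup X D)"
  define bnd where "bnd r \<longleftrightarrow> r \<in> tower \<and> (\<exists>d\<in>D. top_le r d)" for r
  have bnd_noeth: "noetherian_top r" if br: "bnd r" for r
  proof -
    obtain d where "d \<in> D" "top_le r d" using br unfolding bnd_def by blast
    then show ?thesis using DN noeth_coarser by blast
  qed
  have bnd_top: "topspace r = X" if "bnd r" for r using that tower_top unfolding bnd_def by blast
  have bnd_down: "bnd r" if bs: "bnd s" "r \<in> tower" "top_le r s" for r s
  proof -
    obtain d where "d \<in> D" "top_le s d" using bs(1) unfolding bnd_def by blast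
    then have "top_le r d" using top_le_trans[OF bs(3)] by blast
    then show ?thesis unfolding bnd_def using bs(2) \<open>d \<in> D\<close> by blast
  qed
  define P where "P z \<longleftrightarrow> (\<forall>n. (\<exists>r. bnd r \<and> openin r (snd (z n))) \<and> fst (z n) \<in> snd (z n))
      \<and> (\<forall>n m. n < m \<longrightarrow> fst (z m) \<notin> snd (z n))" for z :: "nat \<Rightarrow> 'a \<times> 'a set"
  have thtop: "topspace (tsup X D) = X" using tsup_top[OF DT] .
  obtain x0 V0 where b0: "badseq (tsup X D) x0 V0" using nn noeth_iff by blast
  have b0o: "openin (tsup X D) (V0 n)" "x0 n \<in> V0 n" for n using b0 unfolding badseq_def by auto
  have b0b: "n < m \<Longrightarrow> x0 m \<notin> V0 n" for n m using b0 unfolding badseq_def by auto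
  have "\<exists>d U. d \<in> D \<and> openin d U \<and> x0 n \<in> U \<and> U \<subseteq> V0 n" for n
  proof -
    have "V0 n \<noteq> X"
    proof
      assume "V0 n = X"
      have "x0 (Suc n) \<in> X" using b0o[of "Suc n"] thtop openin_subset by blast
      then show False using b0b[of n "Suc n"] \<open>V0 n = X\<close> by simp
    qed
    moreover have "V0 n = X \<or> (\<forall>y\<in>V0 n. \<exists>d\<in>D. \<exists>U. openin d U \<and> y \<in> U \<and> U \<subseteq> V0 n)"
    proof (rule tsup_open_chain[OF _ _ b0o(1)])
      show "\<And>d. d \<in> D \<Longrightarrow> topspace d = X" using DT tower_top by blast
      show "\<And>a b. a \<in> D \<Longrightarrow> b \<in> D \<Longrightarrow> top_le a b \<or> top_le b a" using DT tower_chain by blast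
    qed
    ultimately have "\<forall>y\<in>V0 n. \<exists>d\<in>D. \<exists>U. openin d U \<and> y \<in> U \<and> U \<subseteq> V0 n" by blast
    then have "\<exists>d\<in>D. \<exists>U. openin d U \<and> x0 n \<in> U \<and> U \<subseteq> V0 n" using b0o(2) by (rule bspec)
    then show ?thesis by blast
  qed
  then obtain dd UU0 where dd: "\<And>n. dd n \<in> D \<and> openin (dd n) (UU0 n) \<and> x0 n \<in> UU0 n \<and> UU0 n \<subseteq> V0 n"
    by metis
  have P0: "P (\<lambda>n. (x0 n, UU0 n))"
    unfolding P_def
  proof (rule conjI; intro allI impI)
    fix n
    have "bnd (dd n)" unfolding bnd_def using dd DT top_le_refl by blast
    then show "(\<exists>r. bnd r \<and> openin r (snd (x0 n, UU0 n))) \<and> fst (x0 n, UU0 n) \<in> snd (x0 n, UU0 n)"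
      using dd by auto
  next
    fix n m :: nat assume "n < m"
    then show "fst (x0 m, UU0 m) \<notin> snd (x0 n, UU0 n)" using b0b dd by auto
  qed
  have "\<exists>z \<rho>. P z \<and> (\<forall>n. \<rho> n \<in> {r. bnd r} \<and> openin (\<rho> n) (snd (z n))) \<and>
     (\<forall>N z' r'. P z' \<and> (\<forall>i<N. z' i = z i) \<and> r' \<in> {r. bnd r} \<and> openin r' (snd (z' N)) \<longrightarrow> top_le (\<rho> N) r')"
  proof (rule minimal_bad[where rk = "\<lambda>e r. openin r (snd e)"])
    fix S assume S: "S \<subseteq> {r. bnd r}" "S \<noteq> {}"
    then have "S \<subseteq> tower" unfolding bnd_def by blast
    then show "\<exists>m\<in>S. \<forall>s\<in>S. top_le m s" using tower_least S(2) by blast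
  next
    fix z :: "nat \<Rightarrow> 'a \<times> 'a set" and n assume "P z"
    then show "\<exists>r\<in>{r. bnd r}. openin r (snd (z n))" unfolding P_def by blast
  next
    fix z :: "nat \<Rightarrow> 'a \<times> 'a set" assume a: "\<And>n. \<exists>z'. P z' \<and> (\<forall>i\<le>n. z' i = z i)"
    show "P z" unfolding P_def
    proof (rule conjI; intro allI impI)
      fix n
      obtain z' where z': "P z'" "\<forall>i\<le>n. z' i = z i" using a by blast
      have "z' n = z n" using z'(2) by simp
      then show "(\<exists>r. bnd r \<and> openin r (snd (z n))) \<and> fst (z n) \<in> snd (z n)"
        using z'(1) unfolding P_def by metis
    next
      fix n m :: nat assume nm: "n < m"
      obtain z' where z': "P z'" "\<forall>i\<le>m. z' i = z i" using a by blast
      have "z' n = z n" "z' m = z m" using z'(2) nm by simp_all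
      then show "fst (z m) \<notin> snd (z n)" using z'(1) nm unfolding P_def by metis
    qed
  next
    show "P (\<lambda>n. (x0 n, UU0 n))" by (rule P0)
  qed
  then obtain z \<rho> where Pz: "P z" and rho: "\<And>n. bnd (\<rho> n) \<and> openin (\<rho> n) (snd (z n))"
    and minim0: "\<forall>N z' r'. P z' \<and> (\<forall>i<N. z' i = z i) \<and> r' \<in> {r. bnd r} \<and> openin r' (snd (z' N)) \<longrightarrow> top_le (\<rho> N) r'"
    by auto
  have minim: "top_le (\<rho> N) r'" if "P z'" "\<forall>i<N. z' i = z i" "bnd r'" "openin r' (snd (z' N))" for N z' r'
    using minim0 that by blast
  define x where "x n = fst (z n)" for n
  define V where "V n = snd (z n)" for n
  have xV: "x n \<in> V n" for n using Pz unfolding P_def x_def V_def by blast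
  have bad: "n < m \<Longrightarrow> x m \<notin> V n" for n m using Pz unfolding P_def x_def V_def by blast
  have Vo: "openin (\<rho> n) (V n)" for n using rho unfolding V_def by blast
  have rb: "bnd (\<rho> n)" for n using rho by blast
  have rt: "\<rho> n \<in> tower" for n using rb unfolding bnd_def by blast
  have rX: "topspace (\<rho> n) = X" for n using rt tower_top by blast
  have VX: "V n \<subseteq> X" for n using openin_subset[OF Vo] rX by simp
  have xX: "x n \<in> X" for n using xV VX by blast
  have VnX: "V n \<noteq> X" for n using bad[of n "Suc n"] xX by auto
  have "\<exists>t\<in>tower. top_le t (\<rho> n) \<and> t \<noteq> \<rho> n \<and> R t = \<rho> n" for n
  proof -
    define L where "L = {y\<in>tower. top_le y (\<rho> n) \<and> y \<noteq> \<rho> n}"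
    have notlim: "\<rho> n \<noteq> tsup X L"
    proof
      assume lim: "\<rho> n = tsup X L"
      have "openin (tsup X L) (V n)" using Vo[of n] lim by simp
      then have "V n = X \<or> (\<forall>y\<in>V n. \<exists>d\<in>L. \<exists>U. openin d U \<and> y \<in> U \<and> U \<subseteq> V n)"
      proof (rule tsup_open_chain[rotated 2])
        show "\<And>d. d \<in> L \<Longrightarrow> topspace d = X" using tower_top unfolding L_def by blast
        show "\<And>a b. a \<in> L \<Longrightarrow> b \<in> L \<Longrightarrow> top_le a b \<or> top_le b a" using tower_chain unfolding L_def by blast
      qed
      then obtain d U where dU: "d \<in> L" "openin d U" "x n \<in> U" "U \<subseteq> V n" using VnX xV by blast
      define z' where "z' = z(n := (x n, U))"
      have bd: "bnd d" using bnd_down[OF rb[of n]] dU(1) unfolding L_def by blast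
      have "P z'" unfolding P_def
      proof (rule conjI; intro allI impI)
        fix k show "(\<exists>r. bnd r \<and> openin r (snd (z' k))) \<and> fst (z' k) \<in> snd (z' k)"
        proof (cases "k = n")
          case True then show ?thesis using dU bd unfolding z'_def by auto
        next
          case False then show ?thesis using Pz unfolding P_def z'_def by auto
        qed
      next
        fix k m :: nat assume km: "k < m"
        have "fst (z' m) = x m" unfolding z'_def x_def by simp
        moreover have "snd (z' k) \<subseteq> V k" using dU(4) unfolding z'_def V_def by simp
        ultimately show "fst (z' m) \<notin> snd (z' k)" using bad[OF km] by (metis subsetD)
      qed
      moreover have "\<forall>i<n. z' i = z i" unfolding z'_def by simp
      moreover have "openin d (snd (z' n))" using dU(2) unfolding z'_def by simp
      ultimately have "top_le (\<rho> n) d" using minim bd by blast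
      then show False using dU(1) top_le_antisym unfolding L_def by blast
    qed
    show ?thesis using tower_repr[OF rt[of n]] notlim unfolding L_def by blast
  qed
  then obtain tau where tau: "\<And>n. tau n \<in> tower \<and> top_le (tau n) (\<rho> n) \<and> tau n \<noteq> \<rho> n \<and> R (tau n) = \<rho> n"
    by metis
  have taub: "bnd (tau n)" for n using bnd_down[OF rb[of n]] tau by blast
  have tauX: "topspace (tau n) = X" for n using taub bnd_top by blast
  define S where "S = {n. \<forall>j<n. top_le (\<rho> j) (\<rho> n) \<and> \<rho> j \<noteq> \<rho> n}"
  have infS: "infinite S"
  proof
    assume "finite S"
    then obtain N where N: "\<And>n. n \<in> S \<Longrightarrow> n < N" using finite_nat_bounded by (meson lessThan_iff subsetD)
    have "\<exists>m\<in>\<rho> ` {..N}. \<forall>a\<in>\<rho> ` {..N}. top_le a m"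
    proof (rule finite_max_chain)
      show "\<And>a b. a \<in> \<rho> ` {..N} \<Longrightarrow> b \<in> \<rho> ` {..N} \<Longrightarrow> top_le a b \<or> top_le b a"
        using tower_chain rt by blast
    qed auto
    then obtain M where M: "M \<in> \<rho> ` {..N}" "\<forall>j\<le>N. top_le (\<rho> j) M" by auto
    have all: "top_le (\<rho> n) M" for n
    proof (induction n rule: less_induct)
      case (less n)
      show ?case
      proof (cases "n \<le> N")
        case True then show ?thesis using M by blast
      next
        case False
        then have "n \<notin> S" using N by force
        then obtain j where j: "j < n" "\<not> (top_le (\<rho> j) (\<rho> n) \<and> \<rho> j \<noteq> \<rho> n)" unfolding S_def by blast
        have "top_le (\<rho> n) (\<rho> j)"
        proof (cases "top_le (\<rho> j) (\<rho> n)")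
          case True then have "\<rho> j = \<rho> n" using j by blast
          then show ?thesis by (simp add: top_le_refl)
        next
          case False then show ?thesis using tower_chain[OF rt rt] by blast
        qed
        moreover have "top_le (\<rho> j) M" using less j(1) by blast
        ultimately show ?thesis by (rule top_le_trans)
      qed
    qed
    have "bnd M" using M(1) rb by auto
    moreover have "badseq M x V" unfolding badseq_def
    proof (rule conjI; intro allI impI)
      fix n show "openin M (V n) \<and> x n \<in> V n" using all[of n] Vo[of n] xV unfolding top_le_def by blast
    next
      fix n m :: nat assume "n < m" then show "x m \<notin> V n" by (rule bad)
    qed
    ultimately show False using bnd_noeth noeth_no_bad by blast
  qed
  have rec_le: "top_le (\<rho> j) (tau n)" if "n \<in> S" "j < n" for j n
  proof -
    have "top_le (\<rho> j) (tau n) \<or> top_le (R (tau n)) (\<rho> j)" using tower_cmp[of "tau n" "\<rho> j"] tau rt by blast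
    moreover have "top_le (\<rho> j) (\<rho> n)" "\<rho> j \<noteq> \<rho> n" using that unfolding S_def by auto
    moreover have "R (tau n) = \<rho> n" using tau by blast
    ultimately show ?thesis using top_le_antisym by metis
  qed
  have tau_mono: "top_le (tau n) (tau m)" if "n \<in> S" "m \<in> S" "n \<le> m" for n m
  proof (cases "n = m")
    case True then show ?thesis by (simp add: top_le_refl)
  next
    case False
    then have "top_le (\<rho> n) (tau m)" using rec_le[of m n] that by simp
    moreover have "top_le (tau n) (\<rho> n)" using tau by blast
    ultimately show ?thesis using top_le_trans by blast
  qed
  define H where "H n = (tau n) closure_of (x ` {n..})" for n
  have Hcl: "closedin (tau n) (H n)" for n unfolding H_def by simp
  have HX: "H n \<subseteq> X" for n using closure_of_subset_topspace[of "tau n"] tauX unfolding H_def by simp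
  have xH: "x m \<in> H n" if "m \<ge> n" for m n
  proof -
    have "x ` {n..} \<subseteq> topspace (tau n)" using xX tauX by auto
    then have "x ` {n..} \<subseteq> H n" unfolding H_def by (rule closure_of_subset)
    then show ?thesis using that by auto
  qed
  have H_anti: "H m \<subseteq> H n" if "n \<in> S" "m \<in> S" "n \<le> m" for n m
  proof -
    have "x ` {m..} \<subseteq> H n" using xH that by auto
    then show ?thesis unfolding H_def[of m]
      using closure_finer[OF tau_mono[OF that] _ Hcl[of n]] tauX by simp
  qed
  have H_avoid: "H n \<inter> V j = {}" if "n \<in> S" "j < n" for n j
  proof -
    have "openin (tau n) (V j)" using rec_le[OF that] Vo unfolding top_le_def by blast
    then have "closedin (tau n) (X - V j)" using tauX by (metis closedin_diff closedin_topspace)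
    moreover have "x ` {n..} \<subseteq> X - V j" using xX bad that by auto
    ultimately have "H n \<subseteq> X - V j" unfolding H_def by (rule closure_of_minimal[rotated])
    then show ?thesis by blast
  qed
  have "\<exists>W. openin (R (subset_restr X (tau n) (H n))) W \<and> W \<inter> H n = V n \<inter> H n" for n
  proof -
    have tR: "top_le (tau n) (R (tau n))" using tower_post tau by blast
    have eq: "subset_restr X (R (tau n)) (H n) = subset_restr X (R (subset_restr X (tau n) (H n))) (H n)"
      using R_exp[OF tauX bnd_noeth[OF taub] tR Hcl] .
    have RX: "topspace (R (tau n)) = X" using R_top[OF tauX] .
    have "openin (R (tau n)) (V n)" using tau Vo by metis
    then have "openin (subset_restr X (R (tau n)) (H n)) (V n \<inter> H n)"
      unfolding subset_restr_open[OF RX] by blast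
    then have o2: "openin (subset_restr X (R (subset_restr X (tau n) (H n))) (H n)) (V n \<inter> H n)"
      by (simp add: eq)
    have tp: "topspace (R (subset_restr X (tau n) (H n))) = X"
      using R_top[OF topspace_subset_restr[OF tauX]] .
    have "V n \<inter> H n = X \<or> (\<exists>U. openin (R (subset_restr X (tau n) (H n))) U \<and> V n \<inter> H n = U \<inter> H n)"
      using o2 unfolding subset_restr_open[OF tp] .
    then show ?thesis
    proof
      assume a: "V n \<inter> H n = X"
      have "openin (R (subset_restr X (tau n) (H n))) X" using tp by (metis openin_topspace)
      moreover have "X \<inter> H n = V n \<inter> H n" using a HX by blast
      ultimately show ?thesis by blast
    next
      assume "\<exists>U. openin (R (subset_restr X (tau n) (H n))) U \<and> V n \<inter> H n = U \<inter> H n"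
      then show ?thesis by metis
    qed
  qed
  then obtain W where W: "\<And>n. openin (R (subset_restr X (tau n) (H n))) (W n) \<and> W n \<inter> H n = V n \<inter> H n"
    by metis
  define G where "G = insert X {U \<inter> H n | n U. n \<in> S \<and> openin (tau n) U}"
  define nu where "nu = topology_generated_by G"
  have GX: "\<And>g. g \<in> G \<Longrightarrow> g \<subseteq> X"
  proof -
    fix g assume "g \<in> G"
    then show "g \<subseteq> X" unfolding G_def using tauX openin_subset by fastforce
  qed
  have nutop: "topspace nu = X" unfolding nu_def topology_generated_by_topspace using GX G_def by blast
  have key: "(U1 \<inter> H n1) \<inter> (U2 \<inter> H n2) \<in> G"
    if a: "n1 \<in> S" "openin (tau n1) U1" "n2 \<in> S" "openin (tau n2) U2" "n1 \<le> n2" for n1 U1 n2 U2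
  proof -
    have "openin (tau n2) U1" using tau_mono[OF a(1) a(3) a(5)] a(2) unfolding top_le_def by blast
    then have "openin (tau n2) (U1 \<inter> U2)" using a(4) by blast
    moreover have "(U1 \<inter> H n1) \<inter> (U2 \<inter> H n2) = (U1 \<inter> U2) \<inter> H n2" using H_anti[OF a(1) a(3) a(5)] by blast
    ultimately show ?thesis unfolding G_def using a(3) by blast
  qed
  have Gint: "a \<inter> b \<in> G" if ab: "a \<in> G" "b \<in> G" for a b
  proof (cases "a = X \<or> b = X")
    case True
    then show ?thesis
    proof
      assume "a = X" then have "a \<inter> b = b" using GX[OF ab(2)] by blast
      then show ?thesis using ab(2) by simp
    next
      assume "b = X" then have "a \<inter> b = a" using GX[OF ab(1)] by blast
      then show ?thesis using ab(1) by simp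
    qed
  next
    case False
    then obtain n1 U1 n2 U2 where A: "n1 \<in> S" "openin (tau n1) U1" "a = U1 \<inter> H n1"
      "n2 \<in> S" "openin (tau n2) U2" "b = U2 \<inter> H n2" using ab unfolding G_def by blast
    show ?thesis
    proof (cases "n1 \<le> n2")
      case True then show ?thesis using key[OF A(1,2,4,5)] A(3,6) by simp
    next
      case False
      then have "(U2 \<inter> H n2) \<inter> (U1 \<inter> H n1) \<in> G" using key[OF A(4,5,1,2)] by simp
      then show ?thesis using A(3,6) by (simp add: Int_commute)
    qed
  qed
  have nu_noeth: "noetherian_top nu"
  proof (rule no_bad_noeth, rule notI)
    fix y Op assume hb: "badseq nu y Op"
    have hbo: "openin nu (Op i)" "y i \<in> Op i" for i using hb unfolding badseq_def by auto
    have hbb: "i < j \<Longrightarrow> y j \<notin> Op i" for i j using hb unfolding badseq_def by auto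
    have "\<exists>n U. n \<in> S \<and> openin (tau n) U \<and> y i \<in> U \<inter> H n \<and> U \<inter> H n \<subseteq> Op i" for i
    proof -
      have "generate_topology_on G (Op i)" using hbo(1)[of i] unfolding nu_def openin_topology_generated_by_iff .
      then have "\<forall>yy\<in>Op i. \<exists>g\<in>G. yy \<in> g \<and> g \<subseteq> Op i"
        by (rule gen_basis[OF _ _ GX Gint]) (simp add: G_def)
      then obtain g where g: "g \<in> G" "y i \<in> g" "g \<subseteq> Op i" using hbo(2)[of i] by blast
      have "g \<noteq> X"
      proof
        assume "g = X"
        have "y (Suc i) \<in> X" using hbo[of "Suc i"] nutop openin_subset by blast
        then show False using g hbb[of i "Suc i"] \<open>g = X\<close> by auto
      qed
      then show ?thesis using g unfolding G_def by blast
    qed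
    then obtain nn UU where nU: "\<And>i. nn i \<in> S \<and> openin (tau (nn i)) (UU i) \<and> y i \<in> UU i \<inter> H (nn i) \<and> UU i \<inter> H (nn i) \<subseteq> Op i"
      by metis
    obtain p :: "nat \<Rightarrow> nat" where p1: "strict_mono p" and p2: "\<forall>i j. i \<le> j \<longrightarrow> nn (p i) \<le> nn (p j)"
      using nat_mono_subseq[of nn] by blast
    have p: "strict_mono p" "\<And>i j. i \<le> j \<Longrightarrow> nn (p i) \<le> nn (p j)" using p1 p2 by auto
    define N where "N = nn (p 0)"
    define z' where "z' k = (if k < N then z k else (y (p (k - N)), UU (p (k - N))))" for k
    have P': "P z'" unfolding P_def
    proof (rule conjI; intro allI impI)
      fix k show "(\<exists>r. bnd r \<and> openin r (snd (z' k))) \<and> fst (z' k) \<in> snd (z' k)"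
      proof (cases "k < N")
        case True then show ?thesis using Pz unfolding P_def z'_def by auto
      next
        case False
        have "bnd (tau (nn (p (k - N))))" by (rule taub)
        then show ?thesis using nU[of "p (k - N)"] False unfolding z'_def by auto
      qed
    next
      fix k m :: nat assume km: "k < m"
      show "fst (z' m) \<notin> snd (z' k)"
      proof (cases "m < N")
        case True
        then have "fst (z' m) = x m" "snd (z' k) = V k" using km unfolding z'_def x_def V_def by auto
        then show ?thesis using bad[OF km] by simp
      next
        case mN: False
        define j where "j = p (m - N)"
        have fz: "fst (z' m) = y j" using mN unfolding z'_def j_def by simp
        have yH: "y j \<in> H (nn j)" using nU by blast
        have jS: "nn j \<in> S" using nU by blast
        have "N \<le> nn j" using p(2)[of 0 "m - N"] unfolding N_def j_def by simp
        show ?thesis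
        proof (cases "k < N")
          case True
          then have "H (nn j) \<inter> V k = {}" using H_avoid[OF jS] \<open>N \<le> nn j\<close> by simp
          moreover have "snd (z' k) = V k" using True unfolding z'_def V_def by simp
          ultimately show ?thesis using fz yH by auto
        next
          case False
          define i where "i = p (k - N)"
          have "k - N < m - N" using km False mN by linarith
          then have ij: "i < j" using p(1) unfolding strict_mono_def i_def j_def by blast
          have "nn i \<le> nn j" using p(2) \<open>k - N < m - N\<close> unfolding i_def j_def by simp
          then have "H (nn j) \<subseteq> H (nn i)" using H_anti nU jS by blast
          moreover have "y j \<notin> Op i" using hbb[OF ij] .
          ultimately have "y j \<notin> UU i" using nU[of i] yH by blast
          moreover have "snd (z' k) = UU i" using False unfolding z'_def i_def by simp
          ultimately show ?thesis using fz by simp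
        qed
      qed
    qed
    have "top_le (\<rho> N) (tau N)"
    proof (rule minim[OF P'])
      show "\<forall>i<N. z' i = z i" unfolding z'_def by simp
      show "bnd (tau N)" by (rule taub)
      show "openin (tau N) (snd (z' N))" using nU[of "p 0"] unfolding z'_def N_def by simp
    qed
    then show False using tau[of N] top_le_antisym by blast
  qed
  have le_nu: "top_le (subset_restr X (tau n) (H n)) nu" if "n \<in> S" for n
    unfolding top_le_def
  proof (intro allI impI)
    fix U assume "openin (subset_restr X (tau n) (H n)) U"
    then have "U = X \<or> (\<exists>U'. openin (tau n) U' \<and> U = U' \<inter> H n)" using subset_restr_open[OF tauX] by blast
    then have "U \<in> G" unfolding G_def using that by blast
    then show "openin nu U" unfolding nu_def by (rule topology_generated_by_Basis)
  qed
  have Wnu: "openin (R nu) (W n)" if "n \<in> S" for n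
  proof -
    have "top_le (R (subset_restr X (tau n) (H n))) (R nu)"
      using R_mono[OF topspace_subset_restr[OF tauX] nutop le_nu[OF that]] .
    then show ?thesis using W[of n] unfolding top_le_def by blast
  qed
  define e where "e = enumerate S"
  have eS: "e k \<in> S" for k unfolding e_def using enumerate_in_set[OF infS] by blast
  have emono: "strict_mono e" unfolding e_def using strict_mono_enumerate[OF infS] .
  have "badseq (R nu) (\<lambda>k. x (e k)) (\<lambda>k. W (e k))" unfolding badseq_def
  proof (rule conjI; intro allI impI)
    fix k
    have "x (e k) \<in> V (e k) \<inter> H (e k)" using xV xH by blast
    then have "x (e k) \<in> W (e k)" using W[of "e k"] by blast
    then show "openin (R nu) (W (e k)) \<and> x (e k) \<in> W (e k)" using Wnu[OF eS] by blast
  next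
    fix k k' :: nat assume "k < k'"
    then have ek: "e k < e k'" using emono unfolding strict_mono_def by blast
    then have "x (e k') \<in> H (e k)" "x (e k') \<notin> V (e k)" using xH bad by auto
    then show "x (e k') \<notin> W (e k)" using W[of "e k"] by blast
  qed
  moreover have "noetherian_top (R nu)" using R_noeth nutop nu_noeth by blast
  ultimately show False using noeth_no_bad by blast
qed

lemma mu_noeth: "noetherian_top mu"
proof -
  have "t \<in> tower \<Longrightarrow> noetherian_top t" for t
  proof (induction rule: tower.induct)
    case (step t) then show ?case using R_noeth tower_top by blast
  next
    case (lim D)
    then have "D \<subseteq> tower" "\<forall>d\<in>D. noetherian_top d" by auto
    then show ?case by (rule sup_noeth)
  qed
  then show ?thesis using mu_tower by blast
qed

end

theorem mainTheorem1:
  fixes X :: "'a set" and R :: "'a topology \<Rightarrow> 'a topology"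
  assumes "topology_expander X R"
  shows "\<exists>\<tau>. is_least_fixpoint X R \<tau> \<and> noetherian_top \<tau>"
proof -
  interpret exp_ctx X R by unfold_locales (rule assms)
  show ?thesis using mu_least mu_noeth by blast
qed

end
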